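(* Let $l\subset\mathbb{P}^3$ be a fixed line and let $r_t$, $t\in\Delta$, be an analytic family of lines in $\mathbb{P}^3$, where $\Delta\subset\mathbb{C}$ is a disk around $0$, such that $l$ and $r_t$ are skew for $t\neq 0$ and $l$ and $r_0$ meet at a point $p$. Let $m,n$ be positive integers. If $F\in\mathbb{C}[[t]][X,Y,Z,W]$ is the equation of an analytic family of surfaces $F_t$ such that for every $t\in\Delta\setminus\{0\}$, $F_t$ has multiplicity at least $m$ along $l$ and at least $n$ along $r_t$, then $F_0$ has multiplicity at least $m$ along $l$, at least $n$ along $r_0$, and at least $m+n$ at $p$. *)

theory Defs
  imports "HOL-Analysis.Analysis"
begin

text \<open>Homogeneous coordinates X,Y,Z,W of P^3 are the four components of a vector
  in complex^4.  A homogeneous polynomial of degree d is given by its coefficients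
  on the monomials x^alpha with alpha of total degree d.\<close>

definition monoms_deg :: "nat \<Rightarrow> (4 \<Rightarrow> nat) set" where
  "monoms_deg d = {\<alpha>. sum \<alpha> UNIV = d}"

definition hpoly_eval :: "nat \<Rightarrow> ((4 \<Rightarrow> nat) \<Rightarrow> complex) \<Rightarrow> complex^4 \<Rightarrow> complex" where
  "hpoly_eval d c x = (\<Sum>\<alpha>\<in>monoms_deg d. c \<alpha> * (\<Prod>i\<in>UNIV. (x$i) ^ (\<alpha> i)))"

definition pderiv4 :: "4 \<Rightarrow> (complex^4 \<Rightarrow> complex) \<Rightarrow> complex^4 \<Rightarrow> complex" where
  "pderiv4 i f x = deriv (\<lambda>s. f (x + s *s axis i 1)) 0"

definition iter_pderiv :: "4 list \<Rightarrow> (complex^4 \<Rightarrow> complex) \<Rightarrow> complex^4 \<Rightarrow> complex" where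
  "iter_pderiv is f = foldr pderiv4 is f"

definition mult_at_least :: "(complex^4 \<Rightarrow> complex) \<Rightarrow> complex^4 \<Rightarrow> nat \<Rightarrow> bool" where
  "mult_at_least f p m \<longleftrightarrow> (\<forall>is. length is < m \<longrightarrow> iter_pderiv is f p = 0)"

text \<open>Complex linear span of two vectors (the affine cone over a projective line)
  and complex linear independence of two vectors.\<close>
definition cspan2 :: "complex^4 \<Rightarrow> complex^4 \<Rightarrow> (complex^4) set" where
  "cspan2 u v = {\<alpha> *s u + \<beta> *s v | \<alpha> \<beta>. True}"

definition cindep2 :: "complex^4 \<Rightarrow> complex^4 \<Rightarrow> bool" where
  "cindep2 u v \<longleftrightarrow> (\<forall>\<alpha> \<beta>. \<alpha> *s u + \<beta> *s v = 0 \<longrightarrow> \<alpha> = 0 \<and> \<beta> = 0)"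

definition mult_along_line :: "(complex^4 \<Rightarrow> complex) \<Rightarrow> complex^4 \<Rightarrow> complex^4 \<Rightarrow> nat \<Rightarrow> bool" where
  "mult_along_line f u v m \<longleftrightarrow> (\<forall>x \<in> cspan2 u v - {0}. mult_at_least f x m)"

end

theory Submission
  imports Defs "HOL-Computational_Algebra.Polynomial"
begin

inductive_set PP :: "(complex \<Rightarrow> complex^4 \<Rightarrow> complex) set" where
  cst: "continuous (at 0) \<phi> \<Longrightarrow> (\<lambda>t x. \<phi> t) \<in> PP"
| crd: "(\<lambda>t x. x $ i) \<in> PP"
| add: "f \<in> PP \<Longrightarrow> g \<in> PP \<Longrightarrow> (\<lambda>t x. f t x + g t x) \<in> PP"
| mul: "f \<in> PP \<Longrightarrow> g \<in> PP \<Longrightarrow> (\<lambda>t x. f t x * g t x) \<in> PP"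

lemma PP_deriv:
  assumes "f \<in> PP"
  shows "\<exists>D. (\<forall>i. D i \<in> PP) \<and> (\<forall>t x w s. ((\<lambda>s. f t (x + s *s w)) has_field_derivative
            (\<Sum>i\<in>UNIV. w$i * D i t (x + s *s w))) (at s))"
  using assms
proof induction
  case (cst \<phi>)
  show ?case
    by (rule exI[of _ "\<lambda>i t x. 0"]) (auto intro: PP.cst)
next
  case (crd i)
  let ?D = "\<lambda>j t (x::complex^4). if j = i then (1::complex) else 0"
  have "?D j \<in> PP" for j
    using PP.cst[of "\<lambda>t. if j = i then (1::complex) else 0"] by simp
  moreover have "((\<lambda>s. (x + s *s w) $ i) has_field_derivative (\<Sum>j\<in>UNIV. w$j * ?D j t (x + s *s w))) (at s)"
    for t x w s
  proof -
    have "((\<lambda>s. x$i + s * w$i) has_field_derivative w$i) (at s)"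
      by (auto intro!: derivative_eq_intros)
    moreover have "(\<Sum>j\<in>UNIV. w$j * ?D j t (x + s *s w)) = w$i"
      by (simp add: if_distrib cong: if_cong)
    ultimately show ?thesis by simp
  qed
  ultimately show ?case by (intro exI[of _ ?D]) blast
next
  case (add f g)
  from add.IH obtain Df Dg where f: "\<forall>i. Df i \<in> PP" "\<forall>t x w s. ((\<lambda>s. f t (x + s *s w)) has_field_derivative
            (\<Sum>i\<in>UNIV. w$i * Df i t (x + s *s w))) (at s)"
    and g: "\<forall>i. Dg i \<in> PP" "\<forall>t x w s. ((\<lambda>s. g t (x + s *s w)) has_field_derivative
            (\<Sum>i\<in>UNIV. w$i * Dg i t (x + s *s w))) (at s)" by blast
  show ?case
    apply (rule exI[of _ "\<lambda>i t x. Df i t x + Dg i t x"])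
    using f g DERIV_add[OF f(2)[rule_format] g(2)[rule_format]]
    by (auto intro!: PP.add simp: distrib_left sum.distrib)
next
  case (mul f g)
  from mul.IH obtain Df Dg where f: "\<forall>i. Df i \<in> PP" "\<forall>t x w s. ((\<lambda>s. f t (x + s *s w)) has_field_derivative
            (\<Sum>i\<in>UNIV. w$i * Df i t (x + s *s w))) (at s)"
    and g: "\<forall>i. Dg i \<in> PP" "\<forall>t x w s. ((\<lambda>s. g t (x + s *s w)) has_field_derivative
            (\<Sum>i\<in>UNIV. w$i * Dg i t (x + s *s w))) (at s)" by blast
  show ?case
    apply (rule exI[of _ "\<lambda>i t x. Df i t x * g t x + f t x * Dg i t x"])
  proof (intro conjI allI)
    fix i show "(\<lambda>t x. Df i t x * g t x + f t x * Dg i t x) \<in> PP"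
      using f g mul.hyps by (auto intro!: PP.add PP.mul)
  next
    fix t x w s
    have "((\<lambda>s. f t (x + s *s w) * g t (x + s *s w)) has_field_derivative
      (\<Sum>i\<in>UNIV. w$i * Df i t (x + s *s w)) * g t (x + s *s w) + (\<Sum>i\<in>UNIV. w$i * Dg i t (x + s *s w)) * f t (x + s *s w)) (at s)"
      using DERIV_mult[OF f(2)[rule_format, of t x w s] g(2)[rule_format, of t x w s]] by simp
    then show "((\<lambda>s. f t (x + s *s w) * g t (x + s *s w)) has_field_derivative
      (\<Sum>i\<in>UNIV. w$i * (Df i t (x + s *s w) * g t (x + s *s w) + f t (x + s *s w) * Dg i t (x + s *s w)))) (at s)"
      by (simp add: distrib_left sum.distrib sum_distrib_left sum_distrib_right algebra_simps)
  qed
qed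

lemma axis_nth': "axis i (1::complex) $ j = (if j = i then 1 else 0)"
  by (simp add: axis_def)

lemma sum_axis: "(\<Sum>j\<in>UNIV. axis i (1::complex) $ j * g j) = g i"
proof -
  have "(\<Sum>j\<in>UNIV. axis i (1::complex) $ j * g j) = (\<Sum>j\<in>UNIV. if j = i then g j else 0)"
    by (rule sum.cong) (auto simp: axis_nth')
  then show ?thesis by simp
qed

lemma PP_pderiv_chain:
  assumes "f \<in> PP"
  shows "(\<lambda>t. pderiv4 i (f t)) \<in> PP"
    and "((\<lambda>s. f t (x + s *s w)) has_field_derivative
            (\<Sum>i\<in>UNIV. w$i * pderiv4 i (f t) (x + s *s w))) (at s)"
proof -
  obtain D where D: "\<forall>i. D i \<in> PP" "\<forall>t x w s. ((\<lambda>s. f t (x + s *s w)) has_field_derivative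
            (\<Sum>i\<in>UNIV. w$i * D i t (x + s *s w))) (at s)"
    using PP_deriv[OF assms] by blast
  have eq: "pderiv4 i (f t) y = D i t y" for i t y
  proof -
    have "deriv (\<lambda>s. f t (y + s *s axis i 1)) 0 = (\<Sum>j\<in>UNIV. axis i 1 $ j * D j t (y + 0 *s axis i 1))"
      by (rule DERIV_imp_deriv) (use D in blast)
    also have "\<dots> = D i t y"
      by (simp add: sum_axis)
    finally show ?thesis by (simp add: pderiv4_def)
  qed
  have "(\<lambda>t. pderiv4 i (f t)) = D i" using eq by (intro ext) auto
  then show "(\<lambda>t. pderiv4 i (f t)) \<in> PP" using D by simp
  show "((\<lambda>s. f t (x + s *s w)) has_field_derivative
            (\<Sum>i\<in>UNIV. w$i * pderiv4 i (f t) (x + s *s w))) (at s)"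
    using D eq by simp
qed

lemma iter_pderiv_Cons: "iter_pderiv (i # is) f = pderiv4 i (iter_pderiv is f)"
  by (simp add: iter_pderiv_def)

lemma iter_pderiv_Nil: "iter_pderiv [] f = f"
  by (simp add: iter_pderiv_def)

lemma PP_iter:
  assumes "f \<in> PP"
  shows "(\<lambda>t. iter_pderiv is (f t)) \<in> PP"
proof (induction "is")
  case Nil then show ?case using assms by (simp add: iter_pderiv_Nil)
next
  case (Cons i "is")
  show ?case using PP_pderiv_chain(1)[OF Cons] by (simp add: iter_pderiv_Cons)
qed

lemma PP_cont:
  assumes "f \<in> PP" and "\<And>i. continuous (at 0) (\<lambda>t. y t $ i)"
  shows "continuous (at 0) (\<lambda>t. f t (y t))"
  using assms(1)
proof induction
  case (cst \<phi>) then show ?case by simp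
next
  case (crd i) then show ?case using assms(2) by simp
next
  case (add f g) then show ?case by (intro continuous_intros)
next
  case (mul f g) then show ?case by (intro continuous_intros)
qed

lemma PP_const: "(\<lambda>t x. c) \<in> PP"
  using PP.cst[of "\<lambda>t. c"] by simp

lemma PP_sum:
  assumes "\<And>a. a \<in> A \<Longrightarrow> (\<lambda>t x. g a t x) \<in> PP"
  shows "(\<lambda>t x. \<Sum>a\<in>A. g a t x) \<in> PP"
proof (cases "finite A")
  case True
  then show ?thesis using assms
  proof (induction A)
    case empty then show ?case using PP_const[of 0] by simp
  next
    case (insert a A)
    then show ?case using PP.add[of "\<lambda>t x. g a t x" "\<lambda>t x. \<Sum>a\<in>A. g a t x"] by simp
  qed
next
  case False then show ?thesis using PP_const[of 0] by simp
qed

lemma PP_prod: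
  assumes "\<And>a. a \<in> A \<Longrightarrow> (\<lambda>t x. g a t x) \<in> PP"
  shows "(\<lambda>t x. \<Prod>a\<in>A. g a t x) \<in> PP"
proof (cases "finite A")
  case True
  then show ?thesis using assms
  proof (induction A)
    case empty then show ?case using PP_const[of 1] by simp
  next
    case (insert a A)
    then show ?case using PP.mul[of "\<lambda>t x. g a t x" "\<lambda>t x. \<Prod>a\<in>A. g a t x"] by simp
  qed
next
  case False then show ?thesis using PP_const[of 1] by simp
qed

lemma PP_pow:
  assumes "f \<in> PP"
  shows "(\<lambda>t x. f t x ^ k) \<in> PP"
proof (induction k)
  case 0 then show ?case using PP_const[of 1] by simp
next
  case (Suc k) then show ?case using PP.mul[OF assms Suc] by simp
qed

lemma PP_hpoly:
  assumes "\<And>\<alpha>. continuous (at 0) (c \<alpha>)"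
  shows "(\<lambda>t x. hpoly_eval d (\<lambda>\<alpha>. c \<alpha> t) x) \<in> PP"
  unfolding hpoly_eval_def
  by (intro PP_sum PP.mul PP.cst assms PP_prod PP_pow PP.crd)

lemma PP_affine:
  assumes "f \<in> PP"
  shows "(\<lambda>t x. f t (A + c *s x)) \<in> PP"
  using assms
proof induction
  case (cst \<phi>) then show ?case by (rule PP.cst)
next
  case (crd i)
  have "(\<lambda>t x. (\<lambda>t x. A$i) t x + (\<lambda>t x. c * x$i) t x) \<in> PP"
    by (intro PP.add PP.mul PP_const PP.crd)
  then show ?case by simp
next
  case (add f g) then show ?case using PP.add by auto
next
  case (mul f g) then show ?case using PP.mul by auto
qed


definition LL :: "nat \<Rightarrow> 4 list set" where "LL j = {is. length is = j}"

lemma finite_LL: "finite (LL j)"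
  using finite_lists_length_eq[of "UNIV::4 set" j] by (simp add: LL_def)

lemma LL_0: "LL 0 = {[]}" by (auto simp: LL_def)

lemma sum_LL_Suc: "(\<Sum>is\<in>LL (Suc j). g is) = (\<Sum>is\<in>LL j. \<Sum>i\<in>UNIV. g (i # is))"
proof -
  have "LL (Suc j) = (\<lambda>(is, i). i # is) ` (LL j \<times> UNIV)"
    using lists_length_Suc_eq[of "UNIV::4 set" j] by (simp add: LL_def)
  then have "(\<Sum>is\<in>LL (Suc j). g is) = (\<Sum>p\<in>LL j \<times> UNIV. g ((\<lambda>(is, i). i # is) p))"
    by (simp add: sum.reindex[OF inj_split_Cons])
  also have "\<dots> = (\<Sum>is\<in>LL j. \<Sum>i\<in>UNIV. g (i # is))"
    by (simp add: sum.cartesian_product split_def)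
  finally show ?thesis .
qed

definition lco :: "(complex^4 \<Rightarrow> complex) \<Rightarrow> nat \<Rightarrow> complex^4 \<Rightarrow> complex^4 \<Rightarrow> complex" where
  "lco g j x w = (\<Sum>is\<in>LL j. prod_list (map (\<lambda>i. w $ i) is) * iter_pderiv is g x)"

lemma chain_iter:
  assumes "f \<in> PP"
  shows "(deriv ^^ j) (\<lambda>s. f t (x + s *s w)) = (\<lambda>s. lco (f t) j (x + s *s w) w)"
proof (induction j)
  case 0 then show ?case by (simp add: lco_def LL_0 iter_pderiv_Nil)
next
  case (Suc j)
  have "(deriv ^^ Suc j) (\<lambda>s. f t (x + s *s w)) = deriv (\<lambda>s. lco (f t) j (x + s *s w) w)"
    using Suc by simp
  also have "\<dots> = (\<lambda>s. lco (f t) (Suc j) (x + s *s w) w)"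
  proof
    fix s
    have "((\<lambda>s. lco (f t) j (x + s *s w) w) has_field_derivative
      (\<Sum>is\<in>LL j. prod_list (map (\<lambda>i. w $ i) is) *
         (\<Sum>i\<in>UNIV. w$i * pderiv4 i (iter_pderiv is (f t)) (x + s *s w)))) (at s)"
      unfolding lco_def
      by (intro DERIV_sum DERIV_cmult PP_pderiv_chain(2)[OF PP_iter[OF assms]])
    moreover have "(\<Sum>is\<in>LL j. prod_list (map (\<lambda>i. w $ i) is) *
         (\<Sum>i\<in>UNIV. w$i * pderiv4 i (iter_pderiv is (f t)) (x + s *s w))) = lco (f t) (Suc j) (x + s *s w) w"
      unfolding lco_def sum_LL_Suc
      by (simp add: sum_distrib_left iter_pderiv_Cons algebra_simps)
    ultimately show "deriv (\<lambda>s. lco (f t) j (x + s *s w) w) s = lco (f t) (Suc j) (x + s *s w) w"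
      using DERIV_imp_deriv by metis
  qed
  finally show ?case .
qed

lemma fwd:
  assumes "f \<in> PP" "mult_at_least (f t) x k" "j < k"
  shows "(deriv ^^ j) (\<lambda>s. f t (x + s *s w)) 0 = 0"
  using assms unfolding chain_iter[OF assms(1)] lco_def mult_at_least_def LL_def by simp


lemma PP_linepoly:
  assumes "f \<in> PP"
  shows "\<exists>N. \<forall>t x w. \<exists>L. degree L \<le> N \<and> (\<forall>s. f t (x + s *s w) = poly L s)"
  using assms
proof induction
  case (cst \<phi>)
  show ?case by (rule exI[of _ 0]) (auto intro!: exI[of _ "[:\<phi> _:]"])
next
  case (crd i)
  show ?case
  proof (rule exI[of _ 1], intro allI)
    fix t x w
    show "\<exists>L. degree L \<le> 1 \<and> (\<forall>s. (x + s *s w) $ i = poly L s)"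
      by (rule exI[of _ "[:x$i, w$i:]"]) (auto simp: degree_pCons_le algebra_simps)
  qed
next
  case (add f g)
  then obtain N1 N2 where N1: "\<forall>t x w. \<exists>L. degree L \<le> N1 \<and> (\<forall>s. f t (x + s *s w) = poly L s)"
    and N2: "\<forall>t x w. \<exists>L. degree L \<le> N2 \<and> (\<forall>s. g t (x + s *s w) = poly L s)" by blast
  show ?case
  proof (rule exI[of _ "max N1 N2"], intro allI)
    fix t x w
    obtain L1 where L1: "degree L1 \<le> N1" "\<forall>s. f t (x + s *s w) = poly L1 s" using N1 by blast
    obtain L2 where L2: "degree L2 \<le> N2" "\<forall>s. g t (x + s *s w) = poly L2 s" using N2 by blast
    show "\<exists>L. degree L \<le> max N1 N2 \<and> (\<forall>s. f t (x + s *s w) + g t (x + s *s w) = poly L s)"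
      by (rule exI[of _ "L1 + L2"]) (use L1 L2 in \<open>auto intro!: degree_add_le\<close>)
  qed
next
  case (mul f g)
  then obtain N1 N2 where N1: "\<forall>t x w. \<exists>L. degree L \<le> N1 \<and> (\<forall>s. f t (x + s *s w) = poly L s)"
    and N2: "\<forall>t x w. \<exists>L. degree L \<le> N2 \<and> (\<forall>s. g t (x + s *s w) = poly L s)" by blast
  show ?case
  proof (rule exI[of _ "N1 + N2"], intro allI)
    fix t x w
    obtain L1 where L1: "degree L1 \<le> N1" "\<forall>s. f t (x + s *s w) = poly L1 s" using N1 by blast
    obtain L2 where L2: "degree L2 \<le> N2" "\<forall>s. g t (x + s *s w) = poly L2 s" using N2 by blast
    have "degree (L1 * L2) \<le> N1 + N2"
      using degree_mult_le[of L1 L2] L1 L2 by linarith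
    then show "\<exists>L. degree L \<le> N1 + N2 \<and> (\<forall>s. f t (x + s *s w) * g t (x + s *s w) = poly L s)"
      by (intro exI[of _ "L1 * L2"]) (use L1 L2 in auto)
  qed
qed

lemma higher_deriv_poly: "(deriv ^^ k) (poly L) = poly ((pderiv ^^ k) L)"
proof (induction k)
  case 0 then show ?case by simp
next
  case (Suc k)
  have "deriv (poly ((pderiv ^^ k) L)) = poly (pderiv ((pderiv ^^ k) L))"
    by (intro ext DERIV_imp_deriv poly_DERIV)
  then show ?case using Suc by simp
qed

lemma poly_higher_pderiv_0: "poly ((pderiv ^^ k) L) 0 = fact k * coeff L k"
  by (simp add: poly_0_coeff_0 coeff_higher_pderiv pochhammer_fact)

lemma line_coeff:
  assumes "f \<in> PP" "\<forall>s. f t (x + s *s w) = poly L s"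
  shows "coeff L k = lco (f t) k x w / fact k"
proof -
  have "poly L = (\<lambda>s. f t (x + s *s w))" using assms(2) by auto
  then have "(deriv ^^ k) (poly L) 0 = lco (f t) k x w"
    using chain_iter[OF assms(1)] by simp
  then show ?thesis by (simp add: higher_deriv_poly poly_higher_pderiv_0 field_simps)
qed

lemma poly_sum_N:
  fixes L :: "complex poly"
  assumes "degree L \<le> N"
  shows "poly L s = (\<Sum>i\<le>N. coeff L i * s ^ i)"
proof -
  have "(\<Sum>i\<le>degree L. coeff L i * s ^ i) = (\<Sum>i\<le>N. coeff L i * s ^ i)"
    by (rule sum.mono_neutral_left) (use assms in \<open>auto simp: coeff_eq_0\<close>)
  then show ?thesis by (simp only: poly_altdef)
qed

lemma iter_pderiv_transl:
  "iter_pderiv is (\<lambda>h. F (x + h)) = (\<lambda>y. iter_pderiv is F (x + y))"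
proof (induction "is")
  case Nil then show ?case by (simp add: iter_pderiv_Nil)
next
  case (Cons i "is")
  show ?case
    by (simp add: iter_pderiv_Cons Cons pderiv4_def add.assoc)
qed

lemma pderiv4_lin:
  assumes "finite J" "\<And>j. j \<in> J \<Longrightarrow> (\<lambda>t h. G j h) \<in> PP"
  shows "pderiv4 i (\<lambda>h. \<Sum>j\<in>J. a j * G j h) y = (\<Sum>j\<in>J. a j * pderiv4 i (G j) y)"
proof -
  have "((\<lambda>s. \<Sum>j\<in>J. a j * G j (y + s *s axis i 1)) has_field_derivative
     (\<Sum>j\<in>J. a j * (\<Sum>k\<in>UNIV. axis i 1 $ k * pderiv4 k (G j) (y + 0 *s axis i 1)))) (at 0)"
    by (intro DERIV_sum DERIV_cmult PP_pderiv_chain(2)[OF assms(2)])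
  then show ?thesis
    unfolding pderiv4_def by (simp add: DERIV_imp_deriv sum_axis pderiv4_def)
qed

lemma iter_pderiv_lin:
  assumes "finite J" "\<And>j. j \<in> J \<Longrightarrow> (\<lambda>t h. G j h) \<in> PP"
  shows "iter_pderiv is (\<lambda>h. \<Sum>j\<in>J. a j * G j h) = (\<lambda>y. \<Sum>j\<in>J. a j * iter_pderiv is (G j) y)"
proof (induction "is")
  case Nil then show ?case by (simp add: iter_pderiv_Nil)
next
  case (Cons i "is")
  have pp: "(\<lambda>t h. iter_pderiv is (G j) h) \<in> PP" if "j \<in> J" for j
    using PP_iter[OF assms(2)[OF that], of "is"] by simp
  show ?case
    by (simp add: iter_pderiv_Cons Cons pderiv4_lin[OF assms(1) pp])
qed

lemma iter_pderiv_zero: "iter_pderiv is (\<lambda>h. 0) y = 0"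
  using iter_pderiv_lin[of "{}" "\<lambda>j h. 0" "is" "\<lambda>j. 0"] by simp

lemma iter_pderiv_cmult:
  assumes "(\<lambda>t h. G h) \<in> PP"
  shows "iter_pderiv is (\<lambda>h. a * G h) y = a * iter_pderiv is G y"
  using iter_pderiv_lin[of "{0::nat}" "\<lambda>j. G" "is" "\<lambda>j. a"] assms by simp

lemma pderiv4_scale:
  assumes "(\<lambda>t h. H h) \<in> PP"
  shows "pderiv4 i (\<lambda>y'. a * H (c *s y')) y = a * (c * pderiv4 i H (c *s y))"
proof -
  have e: "c *s (y + s *s axis i 1) = c *s y + s *s (c *s axis i 1)" for s
    by (simp add: vec_eq_iff algebra_simps)
  have "((\<lambda>s. a * H (c *s y + s *s (c *s axis i 1))) has_field_derivative
     a * (\<Sum>k\<in>UNIV. (c *s axis i 1) $ k * pderiv4 k H (c *s y + 0 *s (c *s axis i 1)))) (at 0)"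
    by (intro DERIV_cmult PP_pderiv_chain(2)[OF assms])
  moreover have "(\<Sum>k\<in>UNIV. (c *s axis i 1) $ k * pderiv4 k H (c *s y + 0 *s (c *s axis i 1)))
     = c * pderiv4 i H (c *s y)"
    using sum_axis[of i "\<lambda>k. c * pderiv4 k H (c *s y)"]
    by (simp add: sum_distrib_left algebra_simps)
  ultimately show ?thesis
    unfolding pderiv4_def e by (simp add: DERIV_imp_deriv pderiv4_def)
qed

lemma iter_pderiv_scale:
  assumes "(\<lambda>t h. G h) \<in> PP"
  shows "iter_pderiv is (\<lambda>h. G (c *s h)) = (\<lambda>y. c ^ length is * iter_pderiv is G (c *s y))"
proof (induction "is")
  case Nil then show ?case by (simp add: iter_pderiv_Nil)
next
  case (Cons i "is")
  have pp: "(\<lambda>t h. iter_pderiv is G h) \<in> PP"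
    using PP_iter[OF assms, of "is"] by simp
  show ?case
    by (simp add: iter_pderiv_Cons Cons pderiv4_scale[OF pp] algebra_simps)
qed


lemma PP_freeze:
  assumes "f \<in> PP"
  shows "(\<lambda>t' x. f t x) \<in> PP"
  using assms
proof induction
  case (cst \<phi>) then show ?case using PP_const[of "\<phi> t"] by simp
next
  case (crd i) then show ?case by (rule PP.crd)
next
  case (add f g) then show ?case using PP.add by auto
next
  case (mul f g) then show ?case using PP.mul by auto
qed

lemma PP_prod_list: "(\<lambda>t h. prod_list (map (\<lambda>i. h $ i) is)) \<in> PP"
proof (induction "is")
  case Nil then show ?case using PP_const[of 1] by simp
next
  case (Cons i "is")
  then show ?case using PP.mul[OF PP.crd[of i] Cons] by simp
qed

lemma PP_lco:
  "(\<lambda>t h. lco Q j y h) \<in> PP"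
  unfolding lco_def
  by (intro PP_sum PP.mul PP_prod_list PP_const)

lemma prod_list_scale:
  fixes h :: "complex^4"
  shows "prod_list (map (\<lambda>i. (c *s h) $ i) is) = c ^ length is * prod_list (map (\<lambda>i. h $ i) is)"
  by (induction "is") (simp_all add: mult_ac)

lemma lco_scale: "lco Q j y (c *s h) = c ^ j * lco Q j y h"
  unfolding lco_def by (simp add: prod_list_scale sum_distrib_left LL_def algebra_simps)

lemma pow2_neq:
  assumes "l < j"
  shows "(2::complex) ^ l \<noteq> 2 ^ j"
proof
  assume "(2::complex) ^ l = 2 ^ j"
  then have "of_nat (2 ^ l) = (of_nat (2 ^ j) :: complex)" by simp
  then have "(2::nat) ^ l = 2 ^ j" using of_nat_eq_iff by blast
  then show False using assms by simp
qed

lemma bwd: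
  assumes fPP: "f \<in> PP" and hyp: "\<forall>w. \<forall>j<k. lco (f t) j x w = 0"
  shows "mult_at_least (f t) x k"
proof -
  define Q where "Q = (\<lambda>h. f t (x + h))"
  have QPP: "(\<lambda>t' h. Q h) \<in> PP"
    using PP_freeze[OF PP_affine[OF fPP, of x 1], of t] by (simp add: Q_def)
  have itQ: "iter_pderiv is Q 0 = iter_pderiv is (f t) x" for "is"
    unfolding Q_def iter_pderiv_transl by simp
  have lcoQ: "lco Q j 0 w = lco (f t) j x w" for j w
    unfolding lco_def itQ by simp
  obtain N where N: "\<forall>t' y w. \<exists>L. degree L \<le> N \<and> (\<forall>s. Q (y + s *s w) = poly L s)"
    using PP_linepoly[OF QPP] by blast
  define G where "G = (\<lambda>j h. lco Q j 0 h)"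
  have GPP: "(\<lambda>t h. G j h) \<in> PP" for j unfolding G_def by (rule PP_lco)
  have Qexp: "Q = (\<lambda>h. \<Sum>j\<in>{..N}. (1 / fact j) * G j h)"
  proof
    fix h
    obtain L where L: "degree L \<le> N" "\<forall>s. Q (0 + s *s h) = poly L s" using N by blast
    have "Q h = poly L 1" using L(2)[rule_format, of 1] by simp
    also have "\<dots> = (\<Sum>j\<le>N. coeff L j)" using poly_sum_N[OF L(1), of 1] by simp
    also have "\<dots> = (\<Sum>j\<le>N. (1 / fact j) * G j h)"
      using line_coeff[OF QPP, where x=0 and w=h and L=L] L(2) by (simp add: G_def)
    finally show "Q h = (\<Sum>j\<in>{..N}. (1 / fact j) * G j h)" by simp
  qed
  show ?thesis unfolding mult_at_least_def
  proof (intro allI impI)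
    fix "is" :: "4 list"
    assume len: "length is < k"
    have "iter_pderiv is (f t) x = iter_pderiv is Q 0" using itQ by simp
    also have "\<dots> = (\<Sum>j\<in>{..N}. (1 / fact j) * iter_pderiv is (G j) 0)"
      by (subst Qexp) (rule fun_cong[OF iter_pderiv_lin[OF _ GPP]], simp)
    also have "\<dots> = 0"
    proof (rule sum.neutral, rule ballI)
      fix j assume "j \<in> {..N}"
      show "(1 / fact j) * iter_pderiv is (G j) 0 = 0"
      proof (cases "j < k")
        case True
        then have "G j = (\<lambda>h. 0)" using hyp by (auto simp: G_def lcoQ)
        then show ?thesis by (simp add: iter_pderiv_zero)
      next
        case False
        have "iter_pderiv is (\<lambda>h. G j (2 *s h)) 0 = 2 ^ length is * iter_pderiv is (G j) 0"
          by (simp add: iter_pderiv_scale[OF GPP])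
        moreover have "(\<lambda>h. G j (2 *s h)) = (\<lambda>h. 2 ^ j * G j h)"
          by (simp add: G_def lco_scale)
        ultimately have "2 ^ j * iter_pderiv is (G j) 0 = 2 ^ length is * iter_pderiv is (G j) 0"
          by (simp add: iter_pderiv_cmult[OF GPP])
        moreover have "(2::complex) ^ length is \<noteq> 2 ^ j"
          using pow2_neq[of "length is" j] False len by simp
        ultimately show ?thesis by simp
      qed
    qed
    finally show "iter_pderiv is (f t) x = 0" .
  qed
qed


lemma dvd_of_derivs:
  fixes L :: "complex poly"
  assumes "\<forall>i<m. poly ((pderiv ^^ i) L) a = 0"
  shows "[:-a, 1:] ^ m dvd L"
  using assms
proof (induction m arbitrary: L)
  case 0 then show ?case by simp
next
  case (Suc m)
  have "\<forall>i<m. poly ((pderiv ^^ i) (pderiv L)) a = 0"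
  proof (intro allI impI)
    fix i assume "i < m"
    have e: "(pderiv ^^ i) (pderiv L) = (pderiv ^^ Suc i) L" by (simp add: funpow_Suc_right del: funpow.simps)
    show "poly ((pderiv ^^ i) (pderiv L)) a = 0" using Suc.prems \<open>i < m\<close> e by (metis Suc_mono)
  qed
  then have d: "[:-a, 1:] ^ m dvd pderiv L" using Suc.IH by blast
  have r: "poly L a = 0" using Suc.prems[rule_format, of 0] by simp
  show ?case
  proof (cases "L = 0")
    case True then show ?thesis by simp
  next
    case Lnz: False
    show ?thesis
    proof (cases "pderiv L = 0")
      case True
      then have "degree L = 0" using pderiv_eq_0_iff by blast
      then obtain c where "L = [:c:]" by (metis degree_eq_zeroE)
      then have "L = 0" using r by simp
      then show ?thesis using Lnz by simp
    next
      case False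
      then have "m \<le> order a (pderiv L)" using d order_divides by blast
      moreover have "order a L = Suc (order a (pderiv L))"
        using order_pderiv[OF Lnz r] .
      ultimately have "Suc m \<le> order a L" by simp
      then show ?thesis using order_divides by blast
    qed
  qed
qed

lemma derivs_of_dvd:
  fixes L :: "complex poly"
  assumes "[:-a, 1:] ^ m dvd L"
  shows "\<forall>i<m. poly ((pderiv ^^ i) L) a = 0"
  using assms
proof (induction m arbitrary: L)
  case 0 then show ?case by simp
next
  case (Suc m)
  obtain q where q: "L = [:-a, 1:] ^ Suc m * q" using Suc.prems unfolding dvd_def by blast
  have "pderiv L = [:- a, 1:] ^ Suc m * pderiv q + smult (of_nat (Suc m)) (q * [:- a, 1:] ^ m)"
    unfolding q by (rule lemma_order_pderiv1)
  then have "[:-a, 1:] ^ m dvd pderiv L"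
    by (metis dvd_add dvd_mult2 dvd_refl dvd_smult dvd_triv_right power_Suc2 mult.assoc)
  then have IH: "\<forall>i<m. poly ((pderiv ^^ i) (pderiv L)) a = 0" using Suc.IH by blast
  show ?case
  proof (intro allI impI)
    fix i assume i: "i < Suc m"
    show "poly ((pderiv ^^ i) L) a = 0"
    proof (cases i)
      case 0 then show ?thesis by (simp add: q)
    next
      case (Suc i')
      have e: "(pderiv ^^ i') (pderiv L) = (pderiv ^^ i) L" using Suc by (simp add: funpow_Suc_right del: funpow.simps)
      then show ?thesis using IH i Suc by (metis Suc_less_SucD)
    qed
  qed
qed

lemma lim0:
  fixes g :: "complex \<Rightarrow> complex"
  assumes "continuous (at 0) g" "eventually (\<lambda>t. g t = 0) (at 0)"
  shows "g 0 = 0"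
proof -
  have "(g \<longlongrightarrow> g 0) (at 0)" using assms(1) continuous_at by blast
  moreover have "(g \<longlongrightarrow> 0) (at 0)" using tendsto_eventually[OF assms(2)] by simp
  ultimately show ?thesis using tendsto_unique[OF at_neq_bot] by blast
qed

lemma onevar:
  fixes L :: "complex \<Rightarrow> complex poly" and \<sigma> :: "complex \<Rightarrow> complex"
  assumes cont: "\<And>k. continuous (at 0) (\<lambda>t. coeff (L t) k)"
    and deg: "\<And>t. degree (L t) \<le> N"
    and \<sigma>c: "continuous (at 0) \<sigma>" and \<sigma>0: "\<sigma> 0 = 0"
    and ev: "eventually (\<lambda>t. \<sigma> t \<noteq> 0 \<and> (\<forall>k<n. coeff (L t) k = 0) \<and>
                 (\<forall>i<m. poly ((pderiv ^^ i) (L t)) (\<sigma> t) = 0)) (at 0)"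
  shows "\<forall>k<m+n. coeff (L 0) k = 0"
proof -
  have low: "coeff (L 0) k = 0" if "k < n" for k
    by (rule lim0[OF cont]) (rule eventually_mono[OF ev], use that in auto)
  define \<psi> where "\<psi> t = poly_shift n (L t)" for t
  have psi_ev: "eventually (\<lambda>t. \<forall>i<m. poly ((pderiv ^^ i) (\<psi> t)) (\<sigma> t) = 0) (at 0)"
  proof (rule eventually_mono[OF ev], elim conjE)
    fix t assume s: "\<sigma> t \<noteq> 0" and lowt: "\<forall>k<n. coeff (L t) k = 0"
      and dv: "\<forall>i<m. poly ((pderiv ^^ i) (L t)) (\<sigma> t) = 0"
    have Leq: "L t = monom 1 n * \<psi> t"
      by (rule poly_eqI) (use lowt in \<open>auto simp: coeff_monom_mult \<psi>_def coeff_poly_shift\<close>)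
    have "[:-\<sigma> t, 1:] ^ m dvd \<psi> t"
    proof (cases "L t = 0")
      case True
      then have "\<psi> t = 0" by (simp add: \<psi>_def)
      then show ?thesis by simp
    next
      case False
      have "[:-\<sigma> t, 1:] ^ m dvd L t" using dvd_of_derivs dv by blast
      then have "m \<le> order (\<sigma> t) (L t)" using False order_divides by blast
      also have "order (\<sigma> t) (L t) = order (\<sigma> t) (monom 1 n) + order (\<sigma> t) (\<psi> t)"
        using False Leq order_mult by metis
      also have "order (\<sigma> t) (monom 1 n) = 0"
        by (rule order_0I) (use s in \<open>simp add: poly_monom\<close>)
      finally show ?thesis by (simp add: order_divides)
    qed
    then show "\<forall>i<m. poly ((pderiv ^^ i) (\<psi> t)) (\<sigma> t) = 0" using derivs_of_dvd by blast
  qed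
  have high: "coeff (L 0) (i + n) = 0" if "i < m" for i
  proof -
    define h where "h t = (\<Sum>k\<le>N. (pochhammer (of_nat (Suc k)) i * coeff (L t) (k + i + n)) * \<sigma> t ^ k)" for t
    have heq: "poly ((pderiv ^^ i) (\<psi> t)) s = (\<Sum>k\<le>N. (pochhammer (of_nat (Suc k)) i * coeff (L t) (k + i + n)) * s ^ k)" for t s
    proof -
      have "degree ((pderiv ^^ i) (\<psi> t)) \<le> N"
        by (rule degree_le) (use deg[of t] in \<open>auto simp: coeff_higher_pderiv \<psi>_def coeff_poly_shift coeff_eq_0\<close>)
      from poly_sum_N[OF this] show ?thesis
        by (simp add: coeff_higher_pderiv \<psi>_def coeff_poly_shift add.assoc)
    qed
    have "h 0 = 0"
    proof (rule lim0)
      show "continuous (at 0) h" unfolding h_def by (intro continuous_intros cont \<sigma>c)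
      show "eventually (\<lambda>t. h t = 0) (at 0)"
      proof (rule eventually_mono[OF psi_ev])
        fix t assume A: "\<forall>i<m. poly ((pderiv ^^ i) (\<psi> t)) (\<sigma> t) = 0"
        have "h t = poly ((pderiv ^^ i) (\<psi> t)) (\<sigma> t)" by (simp only: h_def heq)
        then show "h t = 0" using A that by simp
      qed
    qed
    then have "poly ((pderiv ^^ i) (\<psi> 0)) 0 = 0" using heq[of 0 0] \<sigma>0 by (simp add: h_def)
    then have "fact i * coeff (\<psi> 0) i = 0" by (simp add: poly_higher_pderiv_0)
    then show ?thesis by (simp add: \<psi>_def coeff_poly_shift)
  qed
  show ?thesis
  proof (intro allI impI)
    fix k assume "k < m + n"
    show "coeff (L 0) k = 0"
    proof (cases "k < n")
      case True then show ?thesis by (rule low)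
    next
      case False
      then have "k = (k - n) + n" "k - n < m" using \<open>k < m + n\<close> by auto
      then show ?thesis using high by metis
    qed
  qed
qed


lemma lco_zero:
  assumes "mult_at_least g x k" "j < k"
  shows "lco g j x w = 0"
  using assms unfolding lco_def mult_at_least_def LL_def by simp

lemma PP_lco_fam:
  assumes "f \<in> PP"
  shows "(\<lambda>t x. lco (f t) k x w) \<in> PP"
  unfolding lco_def
  by (intro PP_sum PP.mul PP_const) (use PP_iter[OF assms] in simp)

lemma AL:
  assumes fPP: "f \<in> PP"
    and zc: "\<And>i. continuous (at 0) (\<lambda>t. z t $ i)"
    and \<sigma>c: "continuous (at 0) \<sigma>" and \<sigma>0: "\<sigma> 0 = 0"
    and ev: "eventually (\<lambda>t. \<sigma> t \<noteq> 0 \<and> mult_at_least (f t) (z t) n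
                   \<and> mult_at_least (f t) (z t + \<sigma> t *s w) m) (at 0)"
  shows "\<forall>j<m+n. lco (f 0) j (z 0) w = 0"
proof -
  obtain N where N: "\<forall>t x w. \<exists>L. degree L \<le> N \<and> (\<forall>s. f t (x + s *s w) = poly L s)"
    using PP_linepoly[OF fPP] by blast
  define L where "L t = (SOME L. degree L \<le> N \<and> (\<forall>s. f t (z t + s *s w) = poly L s))" for t
  have Lp: "degree (L t) \<le> N \<and> (\<forall>s. f t (z t + s *s w) = poly (L t) s)" for t
    unfolding L_def by (rule someI_ex) (use N in blast)
  have co: "coeff (L t) k = lco (f t) k (z t) w / fact k" for t k
    using line_coeff[OF fPP] Lp by blast
  have cont: "continuous (at 0) (\<lambda>t. coeff (L t) k)" for k
    unfolding co
    by (intro continuous_intros PP_cont[OF PP_lco_fam[OF fPP] zc]) simp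
  have pd: "poly ((pderiv ^^ i) (L t)) s = lco (f t) i (z t + s *s w) w" for t i s
  proof -
    have "poly (L t) = (\<lambda>s. f t (z t + s *s w))" using Lp by auto
    then have "(deriv ^^ i) (poly (L t)) = (\<lambda>s. lco (f t) i (z t + s *s w) w)"
      using chain_iter[OF fPP] by simp
    then show ?thesis by (simp add: higher_deriv_poly)
  qed
  have "\<forall>k<m+n. coeff (L 0) k = 0"
  proof (rule onevar[OF cont _ \<sigma>c \<sigma>0])
    show "degree (L t) \<le> N" for t using Lp by blast
    show "eventually (\<lambda>t. \<sigma> t \<noteq> 0 \<and> (\<forall>k<n. coeff (L t) k = 0) \<and>
                 (\<forall>i<m. poly ((pderiv ^^ i) (L t)) (\<sigma> t) = 0)) (at 0)"
      by (rule eventually_mono[OF ev]) (auto simp: co pd lco_zero)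
  qed
  then show ?thesis by (simp add: co)
qed


definition det4 :: "complex^4 \<Rightarrow> complex^4 \<Rightarrow> complex^4 \<Rightarrow> complex^4 \<Rightarrow> complex" where
  "det4 x y z w = x$1 * y$2 * z$3 * w$4 - x$1 * y$2 * z$4 * w$3 - x$1 * y$3 * z$2 * w$4 + x$1 * y$3 * z$4 * w$2 + x$1 * y$4 * z$2 * w$3 - x$1 * y$4 * z$3 * w$2 - x$2 * y$1 * z$3 * w$4 + x$2 * y$1 * z$4 * w$3 + x$2 * y$3 * z$1 * w$4 - x$2 * y$3 * z$4 * w$1 - x$2 * y$4 * z$1 * w$3 + x$2 * y$4 * z$3 * w$1 + x$3 * y$1 * z$2 * w$4 - x$3 * y$1 * z$4 * w$2 - x$3 * y$2 * z$1 * w$4 + x$3 * y$2 * z$4 * w$1 + x$3 * y$4 * z$1 * w$2 - x$3 * y$4 * z$2 * w$1 - x$4 * y$1 * z$2 * w$3 + x$4 * y$1 * z$3 * w$2 + x$4 * y$2 * z$1 * w$3 - x$4 * y$2 * z$3 * w$1 - x$4 * y$3 * z$1 * w$2 + x$4 * y$3 * z$2 * w$1"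

lemma cramer:
  "det4 w v a b *s u + det4 u w a b *s v + det4 u v w b *s a + det4 u v a w *s b = det4 u v a b *s w"
  unfolding vec_eq_iff forall_4 by (simp add: det4_def algebra_simps)

lemma det4_lin3: "det4 u v (x + c *s y) b = det4 u v x b + c * det4 u v y b"
  by (simp add: det4_def algebra_simps)
lemma det4_lin4: "det4 u v a (x + c *s y) = det4 u v a x + c * det4 u v a y"
  by (simp add: det4_def algebra_simps)
lemma det4_swap34: "det4 u v x y = - det4 u v y x"
  by (simp add: det4_def algebra_simps)
lemma det4_alt: "det4 u v u b = 0" "det4 u v v b = 0" "det4 u v b b = 0"
  "det4 u v a u = 0" "det4 u v a v = 0"
  by (simp_all add: det4_def algebra_simps)
lemma det4_smult3: "det4 u v (c *s x) b = c * det4 u v x b"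
  by (simp add: det4_def algebra_simps)
lemma det4_add3: "det4 u v (x + y) b = det4 u v x b + det4 u v y b"
  by (simp add: det4_def algebra_simps)
lemma det4_smult4: "det4 u v a (c *s x) = c * det4 u v a x"
  by (simp add: det4_def algebra_simps)
lemma det4_add4: "det4 u v a (x + y) = det4 u v a x + det4 u v a y"
  by (simp add: det4_def algebra_simps)
lemma det4_id: "det4 (axis 1 1) (axis 2 1) (axis 3 1) (axis 4 1) = 1"
  by (simp add: det4_def axis_def)

lemma cspan2_iff: "x \<in> cspan2 u v \<longleftrightarrow> (\<exists>\<alpha> \<beta>. x = \<alpha> *s u + \<beta> *s v)"
  by (auto simp: cspan2_def)

lemma cindep2_nz: "cindep2 u v \<Longrightarrow> u \<noteq> 0 \<and> v \<noteq> 0"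
  unfolding cindep2_def
  by (metis add.left_neutral add.right_neutral one_neq_zero vector_smult_lzero vector_smult_rzero)


lemma cs_add: "x \<in> cspan2 p z \<Longrightarrow> y \<in> cspan2 p z \<Longrightarrow> x + y \<in> cspan2 p z"
proof -
  assume "x \<in> cspan2 p z" "y \<in> cspan2 p z"
  then obtain a b a' b' where "x = a *s p + b *s z" "y = a' *s p + b' *s z" by (auto simp: cspan2_iff)
  then have "x + y = (a + a') *s p + (b + b') *s z" by (simp add: vec_eq_iff algebra_simps)
  then show ?thesis unfolding cspan2_iff by blast
qed

lemma cs_smult: "x \<in> cspan2 p z \<Longrightarrow> c *s x \<in> cspan2 p z"
proof -
  assume "x \<in> cspan2 p z"
  then obtain a b where "x = a *s p + b *s z" by (auto simp: cspan2_iff)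
  then have "c *s x = (c * a) *s p + (c * b) *s z" by (simp add: vec_eq_iff algebra_simps)
  then show ?thesis unfolding cspan2_iff by blast
qed

lemma cs_diff: "x \<in> cspan2 p z \<Longrightarrow> y \<in> cspan2 p z \<Longrightarrow> x - y \<in> cspan2 p z"
  using cs_add[of x p z "(-1) *s y"] cs_smult[of y p z "-1"]
  by (simp add: vector_sneg_minus1[symmetric])

lemma cs_base: "p \<in> cspan2 p z" "z \<in> cspan2 p z"
proof -
  have "p = 1 *s p + 0 *s z" "z = 0 *s p + 1 *s z" by simp_all
  then show "p \<in> cspan2 p z" "z \<in> cspan2 p z" unfolding cspan2_iff by blast+
qed

lemma cs_sub:
  assumes "u \<in> cspan2 p z" "v \<in> cspan2 p z"
  shows "cspan2 u v \<subseteq> cspan2 p z"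
proof
  fix x assume "x \<in> cspan2 u v"
  then obtain a b where "x = a *s u + b *s v" by (auto simp: cspan2_iff)
  then show "x \<in> cspan2 p z" using assms by (simp add: cs_add cs_smult)
qed

lemma smult_solve:
  fixes z y :: "complex^4"
  assumes "c \<noteq> 0" "c *s z = y"
  shows "z = (1/c) *s y"
  using assms by (auto simp: vector_smult_assoc)

lemma two_dim:
  assumes p0: "p \<noteq> 0" and pl: "p \<in> cspan2 u v" and zl: "z \<in> cspan2 u v"
    and nk: "\<not> (\<exists>\<kappa>. z = \<kappa> *s p)"
  shows "cspan2 u v = cspan2 p z"
proof -
  obtain \<alpha> \<beta> where p: "p = \<alpha> *s u + \<beta> *s v" using pl by (auto simp: cspan2_iff)
  obtain \<alpha>' \<beta>' where z: "z = \<alpha>' *s u + \<beta>' *s v" using zl by (auto simp: cspan2_iff)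
  define \<Delta> where "\<Delta> = \<alpha> * \<beta>' - \<alpha>' * \<beta>"
  have e1: "\<Delta> *s u = \<beta>' *s p - \<beta> *s z"
    unfolding p z \<Delta>_def by (simp add: vec_eq_iff algebra_simps)
  have e2: "\<Delta> *s v = \<alpha> *s z - \<alpha>' *s p"
    unfolding p z \<Delta>_def by (simp add: vec_eq_iff algebra_simps)
  have \<Delta>: "\<Delta> \<noteq> 0"
  proof
    assume D: "\<Delta> = 0"
    then have a: "\<beta> *s z = \<beta>' *s p" and b: "\<alpha> *s z = \<alpha>' *s p" using e1 e2 by auto
    show False
    proof (cases "\<beta> = 0")
      case False
      then have "z = (1/\<beta>) *s (\<beta>' *s p)" using smult_solve[OF False a] by simp
      then show False using nk by (auto simp: vector_smult_assoc)
    next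
      case True
      show False
      proof (cases "\<alpha> = 0")
        case False
        then have "z = (1/\<alpha>) *s (\<alpha>' *s p)" using smult_solve[OF False b] by simp
        then show False using nk by (auto simp: vector_smult_assoc)
      next
        case True
        then show False using \<open>\<beta> = 0\<close> p p0 by simp
      qed
    qed
  qed
  have u: "u \<in> cspan2 p z"
    using smult_solve[OF \<Delta> e1] cs_smult cs_diff cs_base by metis
  have v: "v \<in> cspan2 p z"
    using smult_solve[OF \<Delta> e2] cs_smult cs_diff cs_base by metis
  show ?thesis
    using cs_sub[OF u v] cs_sub[OF pl zl] by blast
qed

lemma meet_line:
  assumes "p \<noteq> 0" "p \<in> cspan2 u v" "p \<in> cspan2 a b" "z \<in> cspan2 u v" "z \<in> cspan2 a b"
    "cspan2 u v \<noteq> cspan2 a b"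
  shows "\<exists>\<kappa>. z = \<kappa> *s p"
proof (rule ccontr)
  assume n: "\<not> (\<exists>\<kappa>. z = \<kappa> *s p)"
  have "cspan2 u v = cspan2 p z" by (rule two_dim) (use assms n in auto)
  moreover have "cspan2 a b = cspan2 p z" by (rule two_dim) (use assms n in auto)
  ultimately show False using assms(6) by simp
qed

lemma not_both_in:
  assumes "cindep2 a b" "a \<in> cspan2 u v" "b \<in> cspan2 u v"
  shows "cspan2 u v = cspan2 a b"
proof (rule two_dim)
  show "a \<noteq> 0" using cindep2_nz[OF assms(1)] by simp
  show "\<not> (\<exists>\<kappa>. b = \<kappa> *s a)"
  proof
    assume "\<exists>\<kappa>. b = \<kappa> *s a"
    then obtain \<kappa> where "b = \<kappa> *s a" by blast
    then have "\<kappa> *s a + (-1) *s b = 0" by (simp add: vec_eq_iff)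
    then show False using assms(1) unfolding cindep2_def by fastforce
  qed
qed (use assms in auto)

lemma indep3:
  assumes "cindep2 u v" "y \<notin> cspan2 u v" "A *s u + B *s v + C *s y = 0"
  shows "A = 0 \<and> B = 0 \<and> C = 0"
proof -
  have C: "C = 0"
  proof (rule ccontr)
    assume C: "C \<noteq> 0"
    have "C *s y = - (A *s u + B *s v)" using assms(3) by (simp add: add_eq_0_iff2 add.commute)
    then have "C *s y = (-A) *s u + (-B) *s v" by (simp add: vec_eq_iff)
    then have "y = (1/C) *s ((-A) *s u + (-B) *s v)" by (rule smult_solve[OF C])
    then have "y \<in> cspan2 u v" using cs_smult cs_add cs_base by metis
    then show False using assms(2) by blast
  qed
  then show ?thesis using assms(1,3) unfolding cindep2_def by auto
qed

lemma factC':
  assumes l: "cindep2 u v" and y: "y \<notin> cspan2 u v" and z: "\<And>e. det4 u v y e = 0"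
  shows False
proof -
  have s1: "det4 u v w q = 0" for w q
  proof -
    have "det4 w v y q *s u + det4 u w y q *s v + det4 u v w q *s y = 0"
      using cramer[of w v y q u] z by simp
    then show ?thesis using indep3[OF l y] by blast
  qed
  have s2: "det4 w v x q = 0" for w x q
  proof -
    have "det4 w v x q *s u + det4 u w x q *s v = 0"
      using cramer[of w v x q u] s1 by simp
    then show ?thesis using l unfolding cindep2_def by blast
  qed
  have s3: "det4 w z x q = 0" for w z x q
  proof -
    have "det4 w z x q *s v = 0"
      using cramer[of z v x q w] s2 by simp
    then show ?thesis using cindep2_nz[OF l] by simp
  qed
  show False using s3 det4_id by (metis zero_neq_one)
qed


lemma ev_nz:
  fixes y :: "complex \<Rightarrow> complex^4"
  assumes "\<And>i. continuous (at 0) (\<lambda>t. y t $ i)" "y 0 \<noteq> 0"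
  shows "eventually (\<lambda>t. y t \<noteq> 0) (at 0)"
proof -
  obtain i where i: "y 0 $ i \<noteq> 0" using assms(2) by (auto simp: vec_eq_iff)
  have "((\<lambda>t. y t $ i) \<longlongrightarrow> y 0 $ i) (at 0)" using assms(1)[of i] continuous_at by blast
  then have "eventually (\<lambda>t. y t $ i \<noteq> 0) (at 0)" using tendsto_imp_eventually_ne i by blast
  then show ?thesis by (rule eventually_mono) auto
qed

lemma hol_cont0:
  assumes "f holomorphic_on ball 0 \<rho>" "\<rho> > 0"
  shows "continuous (at 0) f"
  using holomorphic_on_imp_continuous_on[OF assms(1)] continuous_on_eq_continuous_at[of "ball 0 \<rho>" f] assms(2)
  by auto

lemma det4_cont:
  assumes "\<And>i. continuous (at 0) (\<lambda>t. x1 t $ i)" "\<And>i. continuous (at 0) (\<lambda>t. x2 t $ i)"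
    "\<And>i. continuous (at 0) (\<lambda>t. x3 t $ i)" "\<And>i. continuous (at 0) (\<lambda>t. x4 t $ i)"
  shows "continuous (at 0) (\<lambda>t. det4 (x1 t) (x2 t) (x3 t) (x4 t))"
  unfolding det4_def by (intro continuous_add continuous_diff continuous_mult assms)

lemma ev_punct: "\<rho> > 0 \<Longrightarrow> eventually (\<lambda>t::complex. t \<in> ball 0 \<rho> - {0}) (at 0)"
  unfolding eventually_at by (rule exI[of _ \<rho>]) (auto simp: dist_commute)


theorem lemma4p1:
  fixes \<rho> :: real and u v p :: "complex^4" and a b :: "complex \<Rightarrow> complex^4"
    and d m n :: nat and c :: "(4 \<Rightarrow> nat) \<Rightarrow> complex \<Rightarrow> complex"
  assumes rho: "\<rho> > 0"
    and l_line: "cindep2 u v"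
    and r_line: "\<And>t. t \<in> ball 0 \<rho> \<Longrightarrow> cindep2 (a t) (b t)"
    and a_an: "\<And>i. (\<lambda>t. a t $ i) holomorphic_on ball 0 \<rho>"
    and b_an: "\<And>i. (\<lambda>t. b t $ i) holomorphic_on ball 0 \<rho>"
    and skew: "\<And>t. t \<in> ball 0 \<rho> - {0} \<Longrightarrow> cspan2 u v \<inter> cspan2 (a t) (b t) = {0}"
    and distinct0: "cspan2 u v \<noteq> cspan2 (a 0) (b 0)"
    and p_nz: "p \<noteq> 0" and p_l: "p \<in> cspan2 u v" and p_r: "p \<in> cspan2 (a 0) (b 0)"
    and mpos: "m > 0" and npos: "n > 0"
    and c_an: "\<And>\<alpha>. c \<alpha> holomorphic_on ball 0 \<rho>"
    and mult_l: "\<And>t. t \<in> ball 0 \<rho> - {0} \<Longrightarrow> mult_along_line (hpoly_eval d (\<lambda>\<alpha>. c \<alpha> t)) u v m"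
    and mult_r: "\<And>t. t \<in> ball 0 \<rho> - {0} \<Longrightarrow> mult_along_line (hpoly_eval d (\<lambda>\<alpha>. c \<alpha> t)) (a t) (b t) n"
  shows "mult_along_line (hpoly_eval d (\<lambda>\<alpha>. c \<alpha> 0)) u v m
       \<and> mult_along_line (hpoly_eval d (\<lambda>\<alpha>. c \<alpha> 0)) (a 0) (b 0) n
       \<and> mult_at_least (hpoly_eval d (\<lambda>\<alpha>. c \<alpha> 0)) p (m + n)"
proof -
  define F where "F = (\<lambda>t x. hpoly_eval d (\<lambda>\<alpha>. c \<alpha> t) x)"
  have ccont: "\<And>\<alpha>. continuous (at 0) (c \<alpha>)" using hol_cont0[OF c_an rho] .
  have FPP: "F \<in> PP" unfolding F_def by (rule PP_hpoly[OF ccont])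
  have acont: "\<And>i. continuous (at 0) (\<lambda>t. a t $ i)" using hol_cont0[OF a_an rho] .
  have bcont: "\<And>i. continuous (at 0) (\<lambda>t. b t $ i)" using hol_cont0[OF b_an rho] .
  have F0: "F 0 = hpoly_eval d (\<lambda>\<alpha>. c \<alpha> 0)" by (simp add: F_def)
  have Ft: "F t = hpoly_eval d (\<lambda>\<alpha>. c \<alpha> t)" for t by (simp add: F_def)
  have evb: "eventually (\<lambda>t::complex. t \<in> ball 0 \<rho> - {0}) (at 0)" by (rule ev_punct[OF rho])
  have ball0: "(0::complex) \<in> ball 0 \<rho>" using rho by simp
  have P1: "mult_along_line (F 0) u v m"
    unfolding mult_along_line_def mult_at_least_def
  proof (intro ballI allI impI)
    fix x "is" assume x: "x \<in> cspan2 u v - {0}" and len: "length (is::4 list) < m"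
    show "iter_pderiv is (F 0) x = 0"
    proof (rule lim0[where g = "\<lambda>t. iter_pderiv is (F t) x"])
      show "continuous (at 0) (\<lambda>t. iter_pderiv is (F t) x)"
        using PP_cont[OF PP_iter[OF FPP], of "\<lambda>t. x" "is"] by simp
      show "eventually (\<lambda>t. iter_pderiv is (F t) x = 0) (at 0)"
        by (rule eventually_mono[OF evb])
          (use mult_l x len in \<open>auto simp: Ft mult_along_line_def mult_at_least_def\<close>)
    qed
  qed
  have P2: "mult_along_line (F 0) (a 0) (b 0) n"
    unfolding mult_along_line_def mult_at_least_def
  proof (intro ballI allI impI)
    fix x "is" assume x: "x \<in> cspan2 (a 0) (b 0) - {0}" and len: "length (is::4 list) < n"
    obtain \<alpha> \<beta> where x\<alpha>: "x = \<alpha> *s a 0 + \<beta> *s b 0" using x by (auto simp: cspan2_iff)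
    define y where "y t = \<alpha> *s a t + \<beta> *s b t" for t
    have yc: "continuous (at 0) (\<lambda>t. y t $ i)" for i
      unfolding y_def by (simp add: acont bcont continuous_intros)
    have ab: "\<alpha> \<noteq> 0 \<or> \<beta> \<noteq> 0" using x x\<alpha> by auto
    have "iter_pderiv is (F 0) (y 0) = 0"
    proof (rule lim0[where g = "\<lambda>t. iter_pderiv is (F t) (y t)"])
      show "continuous (at 0) (\<lambda>t. iter_pderiv is (F t) (y t))"
        using PP_cont[OF PP_iter[OF FPP] yc] by simp
      show "eventually (\<lambda>t. iter_pderiv is (F t) (y t) = 0) (at 0)"
      proof (rule eventually_mono[OF evb])
        fix t :: complex assume t: "t \<in> ball 0 \<rho> - {0}"
        have "y t \<in> cspan2 (a t) (b t)" unfolding y_def cspan2_iff by blast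
        moreover have "y t \<noteq> 0" using r_line[of t] t ab unfolding cindep2_def y_def by auto
        ultimately show "iter_pderiv is (F t) (y t) = 0"
          using mult_r[OF t] len by (auto simp: Ft mult_along_line_def mult_at_least_def)
      qed
    qed
    then show "iter_pderiv is (F 0) x = 0" by (simp add: y_def x\<alpha>)
  qed
  obtain \<alpha>p \<beta>p where pl: "p = \<alpha>p *s u + \<beta>p *s v" using p_l by (auto simp: cspan2_iff)
  obtain \<gamma>p \<delta>p where pr: "p = \<gamma>p *s a 0 + \<delta>p *s b 0" using p_r by (auto simp: cspan2_iff)
  have D0: "det4 u v (a 0) (b 0) = 0"
  proof (cases "\<gamma>p = 0")
    case False
    have "\<gamma>p *s a 0 = \<alpha>p *s u + \<beta>p *s v + (- \<delta>p) *s b 0"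
      using pl pr by (simp add: vec_eq_iff algebra_simps)
    then have "a 0 = (1/\<gamma>p) *s (\<alpha>p *s u + \<beta>p *s v + (- \<delta>p) *s b 0)" by (rule smult_solve[OF False])
    then show ?thesis
      by (simp only: det4_smult3 det4_add3 det4_alt mult_zero_right add_0_right)
  next
    case True
    then have d: "\<delta>p \<noteq> 0" using pr p_nz by auto
    have "\<delta>p *s b 0 = \<alpha>p *s u + \<beta>p *s v"
      using pl pr True by simp
    then have "b 0 = (1/\<delta>p) *s (\<alpha>p *s u + \<beta>p *s v)" by (rule smult_solve[OF d])
    then show ?thesis
      by (simp only: det4_smult4 det4_add4 det4_alt mult_zero_right add_0_right)
  qed
  have good: "\<forall>j<m+n. lco (F 0) j p w = 0"
    if G: "det4 u v w (b 0) \<noteq> 0 \<or> det4 u v (a 0) w \<noteq> 0" for w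
  proof -
    define z where "z t = det4 u v w (b t) *s a t + det4 u v (a t) w *s b t" for t
    define D where "D t = det4 u v (a t) (b t)" for t
    have cr: "z t - D t *s w = (- det4 w v (a t) (b t)) *s u + (- det4 u w (a t) (b t)) *s v" for t
      using cramer[of w v "a t" "b t" u] unfolding z_def D_def
      by (simp add: vec_eq_iff algebra_simps)
    have zl: "z t - D t *s w \<in> cspan2 u v" for t unfolding cr cspan2_iff by blast
    have zr: "z t \<in> cspan2 (a t) (b t)" for t unfolding z_def cspan2_iff by blast
    have zc: "continuous (at 0) (\<lambda>t. z t $ i)" for i
      unfolding z_def using det4_cont[of "\<lambda>t. u" "\<lambda>t. v" "\<lambda>t. w" b] det4_cont[of "\<lambda>t. u" "\<lambda>t. v" a "\<lambda>t. w"]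
      by (simp add: acont bcont continuous_intros)
    have Dc: "continuous (at 0) D"
      unfolding D_def by (rule det4_cont) (simp_all add: acont bcont)
    have xc: "continuous (at 0) (\<lambda>t. (z t - D t *s w) $ i)" for i
      using zc[of i] Dc by (simp add: continuous_intros)
    have z0nz: "z 0 \<noteq> 0"
      using r_line[OF ball0] G unfolding cindep2_def z_def by blast
    have z0l: "z 0 \<in> cspan2 u v" using zl[of 0] D0 by (simp add: D_def)
    obtain \<kappa> where \<kappa>: "z 0 = \<kappa> *s p"
      using meet_line[OF p_nz p_l p_r z0l zr[of 0] distinct0] by blast
    have \<kappa>0: "\<kappa> \<noteq> 0" using z0nz \<kappa> by auto
    define z' where "z' t = (1/\<kappa>) *s z t" for t
    define w' where "w' = (1/\<kappa>) *s w"
    define \<sigma> where "\<sigma> t = - D t" for t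
    have "\<forall>j<m+n. lco (F 0) j (z' 0) w' = 0"
    proof (rule AL[OF FPP])
      show "continuous (at 0) (\<lambda>t. z' t $ i)" for i using continuous_mult[OF continuous_const zc[of i], of "1/\<kappa>"] by (simp add: z'_def)
      show "continuous (at 0) \<sigma>" unfolding \<sigma>_def using Dc by (simp add: continuous_intros)
      show "\<sigma> 0 = 0" unfolding \<sigma>_def D_def using D0 by simp
      have ev1: "eventually (\<lambda>t. z t \<noteq> 0) (at 0)" by (rule ev_nz[OF zc z0nz])
      have ev2: "eventually (\<lambda>t. z t - D t *s w \<noteq> 0) (at 0)"
        by (rule ev_nz[OF xc]) (use z0nz D0 in \<open>simp add: D_def\<close>)
      show "eventually (\<lambda>t. \<sigma> t \<noteq> 0 \<and> mult_at_least (F t) (z' t) n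
                   \<and> mult_at_least (F t) (z' t + \<sigma> t *s w') m) (at 0)"
      proof (rule eventually_mono[OF eventually_conj[OF evb eventually_conj[OF ev1 ev2]]], elim conjE, intro conjI)
        fix t :: complex
        assume t: "t \<in> ball 0 \<rho> - {0}" and znz: "z t \<noteq> 0" and xnz: "z t - D t *s w \<noteq> 0"
        have "D t \<noteq> 0"
        proof
          assume "D t = 0"
          then have "z t \<in> cspan2 u v \<inter> cspan2 (a t) (b t)" using zl[of t] zr[of t] by simp
          then show False using skew[OF t] znz by simp
        qed
        then show "\<sigma> t \<noteq> 0" by (simp add: \<sigma>_def)
        have "z' t \<in> cspan2 (a t) (b t) - {0}"
          using zr[of t] znz \<kappa>0 cs_smult by (auto simp: z'_def)
        then show "mult_at_least (F t) (z' t) n"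
          using mult_r[OF t] by (simp add: Ft mult_along_line_def)
        have e: "z' t + \<sigma> t *s w' = (1/\<kappa>) *s (z t - D t *s w)"
          by (simp add: z'_def w'_def \<sigma>_def vec_eq_iff algebra_simps)
        have m1: "(1/\<kappa>) *s (z t - D t *s w) \<in> cspan2 u v" by (rule cs_smult[OF zl[of t]])
        have m2: "(1/\<kappa>) *s (z t - D t *s w) \<noteq> 0"
          by (subst vector_mul_eq_0) (use xnz \<kappa>0 in simp)
        have "z' t + \<sigma> t *s w' \<in> cspan2 u v - {0}"
          unfolding e using m1 m2 by blast
        then show "mult_at_least (F t) (z' t + \<sigma> t *s w') m"
          using mult_l[OF t] by (simp add: Ft mult_along_line_def)
      qed
    qed
    moreover have "z' 0 = p" using \<kappa> \<kappa>0 by (simp add: z'_def vector_smult_assoc)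
    moreover have "w = \<kappa> *s w'" using \<kappa>0 by (simp add: w'_def vector_smult_assoc)
    ultimately show ?thesis by (simp add: lco_scale)
  qed
  have exe: "\<exists>e. det4 u v e (b 0) \<noteq> 0 \<or> det4 u v (a 0) e \<noteq> 0"
  proof (rule ccontr)
    assume A: "\<not> (\<exists>e. det4 u v e (b 0) \<noteq> 0 \<or> det4 u v (a 0) e \<noteq> 0)"
    have "a 0 \<notin> cspan2 u v \<or> b 0 \<notin> cspan2 u v"
      using not_both_in[OF r_line[OF ball0]] distinct0 by blast
    then show False
    proof
      assume "a 0 \<notin> cspan2 u v"
      then show False using factC'[OF l_line, of "a 0"] A by blast
    next
      assume "b 0 \<notin> cspan2 u v"
      moreover have "det4 u v (b 0) e = 0" for e using A det4_swap34[of u v "b 0" e] by auto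
      ultimately show False using factC'[OF l_line, of "b 0"] by blast
    qed
  qed
  then obtain e where e: "det4 u v e (b 0) \<noteq> 0 \<or> det4 u v (a 0) e \<noteq> 0" by blast
  have allw: "\<forall>j<m+n. lco (F 0) j p w = 0" for w
  proof (cases "det4 u v w (b 0) \<noteq> 0 \<or> det4 u v (a 0) w \<noteq> 0")
    case True then show ?thesis by (rule good)
  next
    case False
    show ?thesis
    proof (intro allI impI)
      fix j assume j: "j < m + n"
      show "lco (F 0) j p w = 0"
      proof (rule lim0[where g = "\<lambda>\<epsilon>. lco (F 0) j p (w + \<epsilon> *s e)", simplified])
        show "continuous (at 0) (\<lambda>\<epsilon>. lco (F 0) j p (w + \<epsilon> *s e))"
          using PP_cont[OF PP_lco[of "F 0" j p], of "\<lambda>\<epsilon>. w + \<epsilon> *s e"] by (simp add: continuous_intros)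
        have "eventually (\<lambda>\<epsilon>::complex. \<epsilon> \<noteq> 0) (at 0)"
          unfolding eventually_at by (rule exI[of _ 1]) auto
        then show "eventually (\<lambda>\<epsilon>. lco (F 0) j p (w + \<epsilon> *s e) = 0) (at 0)"
        proof (rule eventually_mono)
          fix \<epsilon> :: complex assume \<epsilon>: "\<epsilon> \<noteq> 0"
          have "det4 u v (w + \<epsilon> *s e) (b 0) \<noteq> 0 \<or> det4 u v (a 0) (w + \<epsilon> *s e) \<noteq> 0"
            using False e \<epsilon> by (simp add: det4_lin3 det4_lin4)
          then show "lco (F 0) j p (w + \<epsilon> *s e) = 0" using good j by blast
        qed
      qed
    qed
  qed
  have P3: "mult_at_least (F 0) p (m + n)"
    by (rule bwd[OF FPP]) (use allw in blast)
  show ?thesis using P1 P2 P3 by (simp add: F0)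
qed


end
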